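(* For the initial pair $(t,x)$, the following are equivalent. i) There exists a unique $v^*\in l^2(\mathbb{T}_t; \mathbb{R}^{m_2})$ such that $J_2(k, X_k^*; {\alpha^t}(x, v^* )|_{\mathbb{T}_k}, v^*|_{\mathbb{T}_k})\leq J_2(k, X_k^*; {\alpha^t}(x, v^{*-k})|_{\mathbb{T}_k}, (v_k, v^*|_{\mathbb{T}_{k+1}}))$ for any $k\in\mathbb{T}_t$ and any $v_k\in l^2(k; \mathbb{R}^{m_2})$, where $X^*_{k+1}=AX^*_k+B_1[\alpha^t(x, v^* )]_{k}+B_2v^*_k$, $X^*_t=x$, and $v^{*-k}_\ell=v_k$ for $\ell=k$, $v^{*-k}_\ell=v^*_\ell$ for $\ell\neq k$, $\ell\in\mathbb{T}_t$ (the state inside the right-hand cost starts at $X_k^*$ at time $k$ and is driven by $\alpha^t(x,v^{*-k})$, $v^{*-k}$). ii) There exists a unique $v^*\in l^2(\mathbb{T}_t; \mathbb{R}^{m_2})$ such that, for all $k\in\mathbb{T}_t$, \begin{eqnarray*} 0&=&\Big{[}\widetilde{B}_{k}^T-\sum_{i=t}^{k-1}D_i^{(k)}(H_k^1)^TB_1^T\Big{]}Z_{k+1}^*+\Big(\widetilde{B}_{k}^T+\sum_{i=t}^{k-1}D_i^{(k)}\widetilde{A}_k^T\Big)\overline{Z}_{k+1}^{(k)*}+\Big{[}(H^2_k)^TR_2H_k^1+\sum_{i=t}^{k-1}D_i^{(k)}(H_k^1)^TR_2H_k^1\Big{]}X_k^*\\ &&+\Big{[}W_2+(H^2_k)^TR_2H^2_k+\sum_{i=t}^{k-1}D_i^{(k)}(H_k^1)^TR_2H^2_k\Big{]}v_k^*+\Big{[}(H^2_k)^TR_2H_k^3+\sum_{i=t}^{k-1}D_i^{(k)}(H_k^1)^TR_2H_k^3\Big{]}\pi_{k+1}^*,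 \end{eqnarray*} where $Z_k^*=Q_2X_{k}^*+A^TZ_{k+1}^*$, $Z_{N}^*=G_2X_N^*$; for each $k\in\mathbb{T}_t$, $\overline{Z}_{\ell}^{(k)*}=(H_{\ell}^1)^TR_2(H_{\ell}^1X_{\ell}^*+H^2_{\ell}v_{\ell}^*+H_{\ell}^3\pi_{\ell+1}^* )-(H_{\ell}^1)^TB_1^TZ_{\ell+1}^*+\widetilde{A}_{\ell}^T\overline{Z}_{\ell+1}^{(k)*}$, $\ell\in\mathbb{T}_k$, $\overline{Z}_{N}^{(k)*}=0$; and $X_{k+1}^*=\widetilde{A}_kX_k^*+\widetilde{B}_kv_{k}^*+\widetilde{C}_k\pi_{k+1}^*$, $\pi_k^*=C_k^Tv_k^*+\widetilde{A}_k^T\pi_{k+1}^*$, $X_t^*=x$, $\pi_{N}^*=0$. In this case, the $v^*$ of ii) is the one of i).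
   Context: Let $N>2$ be an integer, $\mathbb{T}_t=\{t,\ldots,N-1\}$, $l^2(\mathbb{T}_t;\mathbb{R}^m)$ the space of $\mathbb{R}^m$-valued sequences on $\mathbb{T}_t$, $l^2(k;\mathbb{R}^m)=\mathbb{R}^m$, $v|_{\mathbb{T}_k}=(v_k,\ldots,v_{N-1})$. System $X_{k+1}=AX_k+B_1u_k+B_2v_k$, $X_t=x$; costs $J_i(t,x;u,v)=\sum_{k=t}^{N-1}(X_k^TQ_iX_k+u_k^TR_iu_k+v_k^TW_iv_k)+X_N^TG_iX_N$, $i=1,2$, with $Q_i,G_i,R_i,W_i$ nonnegative definite; $J_i(k,y;\cdot,\cdot)$ is the same functional started at time $k$ from $y$. Assume $M_k=B_1^TP_{k+1}B_1+R_1>0$, $k\in\mathbb{T}_t$, where $P_k=Q_1+A^TP_{k+1}A-A^TP_{k+1}B_1M_k^{-1}B_1^TP_{k+1}A$, $P_N=G_1$. Set $H^1_k=M_k^{-1}B_1^TP_{k+1}A$, $H^2_k=M_k^{-1}B_1^TP_{k+1}B_2$, $H^3_k=M_k^{-1}B_1^T$, $\widetilde{A}_k=A-B_1H^1_k$, $\widetilde{B}_k=B_2-B_1H^2_k$, $\widetilde{C}_k=-B_1H^3_k$, $C_k=(B_2^T-B_2^TP_{k+1}B_1M_k^{-1}B_1^T)P_{k+1}A$, and $D_i^{(k)}=C_k\widetilde{A}_{k-1}\cdots \widetilde{A}_{i+1}\widetilde{C}_i^T\widetilde{A}_{i+1}^T \cdots \widetilde{A}_{k-1}^T$ (empty products equal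 $I$). The follower's equilibrium response map is $[\alpha^t(x,v)]_k=-(H^1_kX_k+H^2_kv_k+H^3_k\pi_{k+1})$, where $X_{k+1}=\widetilde{A}_kX_k+\widetilde{B}_kv_k+\widetilde{C}_k\pi_{k+1}$, $\pi_k=C_k^Tv_k+\widetilde{A}_k^T\pi_{k+1}$, $X_t=x$, $\pi_N=0$. *)

theory Defs
  imports "HOL-Analysis.Analysis"
begin

function bwd :: "(nat \<Rightarrow> 'a \<Rightarrow> 'a) \<Rightarrow> 'a \<Rightarrow> nat \<Rightarrow> nat \<Rightarrow> 'a" where
  "bwd F b N k = (if N \<le> k then b else F k (bwd F b N (Suc k)))"
  by pat_completeness auto
termination by (relation "Wellfounded.measure (\<lambda>(F, b, N, k). N - k)") auto

fun fwd :: "(nat \<Rightarrow> 'a \<Rightarrow> 'a) \<Rightarrow> 'a \<Rightarrow> nat \<Rightarrow> nat \<Rightarrow> 'a" where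
  "fwd F x t 0 = x"
| "fwd F x t (Suc k) = (if Suc k \<le> t then x else F k (fwd F x t k))"

text \<open>Ordered product F (k-1) ** ... ** F (i+1), identity if empty.\<close>
fun aprod :: "(nat \<Rightarrow> real^'n^'n) \<Rightarrow> nat \<Rightarrow> nat \<Rightarrow> real^'n^'n" where
  "aprod F i 0 = mat 1"
| "aprod F i (Suc k) = (if Suc k \<le> Suc i then mat 1 else F k ** aprod F i k)"

definition nnd :: "real^'n^'n \<Rightarrow> bool" where
  "nnd M \<longleftrightarrow> transpose M = M \<and> (\<forall>y. 0 \<le> y \<bullet> (M *v y))"

definition posdef :: "real^'n^'n \<Rightarrow> bool" where
  "posdef M \<longleftrightarrow> (\<forall>y. y \<noteq> 0 \<longrightarrow> 0 < y \<bullet> (M *v y))"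

record ('n, 'm1, 'm2) lqgame =
  sA  :: "real^'n^'n"
  sB1 :: "real^'m1^'n"
  sB2 :: "real^'m2^'n"
  sQ1 :: "real^'n^'n"
  sQ2 :: "real^'n^'n"
  sR1 :: "real^'m1^'m1"
  sR2 :: "real^'m1^'m1"
  sW1 :: "real^'m2^'m2"
  sW2 :: "real^'m2^'m2"
  sG1 :: "real^'n^'n"
  sG2 :: "real^'n^'n"
  sN  :: nat

definition Ric :: "('n::finite, 'm1::finite, 'm2::finite) lqgame \<Rightarrow> nat \<Rightarrow> real^'n^'n" where
  "Ric S = bwd (\<lambda>_ P. sQ1 S + transpose (sA S) ** P ** sA S
      - transpose (sA S) ** P ** sB1 S
        ** matrix_inv (transpose (sB1 S) ** P ** sB1 S + sR1 S)
        ** transpose (sB1 S) ** P ** sA S) (sG1 S) (sN S)"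

definition Mk :: "('n::finite, 'm1::finite, 'm2::finite) lqgame \<Rightarrow> nat \<Rightarrow> real^'m1^'m1" where
  "Mk S k = transpose (sB1 S) ** Ric S (Suc k) ** sB1 S + sR1 S"

definition H1 :: "('n::finite, 'm1::finite, 'm2::finite) lqgame \<Rightarrow> nat \<Rightarrow> real^'n^'m1" where
  "H1 S k = matrix_inv (Mk S k) ** transpose (sB1 S) ** Ric S (Suc k) ** sA S"

definition H2 :: "('n::finite, 'm1::finite, 'm2::finite) lqgame \<Rightarrow> nat \<Rightarrow> real^'m2^'m1" where
  "H2 S k = matrix_inv (Mk S k) ** transpose (sB1 S) ** Ric S (Suc k) ** sB2 S"

definition H3 :: "('n::finite, 'm1::finite, 'm2::finite) lqgame \<Rightarrow> nat \<Rightarrow> real^'n^'m1" where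
  "H3 S k = matrix_inv (Mk S k) ** transpose (sB1 S)"

definition At :: "('n::finite, 'm1::finite, 'm2::finite) lqgame \<Rightarrow> nat \<Rightarrow> real^'n^'n" where
  "At S k = sA S - sB1 S ** H1 S k"

definition Bt :: "('n::finite, 'm1::finite, 'm2::finite) lqgame \<Rightarrow> nat \<Rightarrow> real^'m2^'n" where
  "Bt S k = sB2 S - sB1 S ** H2 S k"

definition Ct :: "('n::finite, 'm1::finite, 'm2::finite) lqgame \<Rightarrow> nat \<Rightarrow> real^'n^'n" where
  "Ct S k = - (sB1 S ** H3 S k)"

definition Cm :: "('n::finite, 'm1::finite, 'm2::finite) lqgame \<Rightarrow> nat \<Rightarrow> real^'n^'m2" where
  "Cm S k = (transpose (sB2 S) - transpose (sB2 S) ** Ric S (Suc k) ** sB1 S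
              ** matrix_inv (Mk S k) ** transpose (sB1 S)) ** Ric S (Suc k) ** sA S"

definition Dm :: "('n::finite, 'm1::finite, 'm2::finite) lqgame \<Rightarrow> nat \<Rightarrow> nat \<Rightarrow> real^'n^'m2" where
  "Dm S i k = Cm S k ** aprod (At S) i k ** transpose (Ct S i) ** transpose (aprod (At S) i k)"

definition piS :: "('n::finite, 'm1::finite, 'm2::finite) lqgame \<Rightarrow> (nat \<Rightarrow> real^'m2) \<Rightarrow> nat \<Rightarrow> real^'n" where
  "piS S v = bwd (\<lambda>k p. transpose (Cm S k) *v v k + transpose (At S k) *v p) 0 (sN S)"

definition XS :: "('n::finite, 'm1::finite, 'm2::finite) lqgame \<Rightarrow> nat \<Rightarrow> real^'n \<Rightarrow> (nat \<Rightarrow> real^'m2) \<Rightarrow> nat \<Rightarrow> real^'n" where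
  "XS S t x v = fwd (\<lambda>k X. At S k *v X + Bt S k *v v k + Ct S k *v piS S v (Suc k)) x t"

definition alpha :: "('n::finite, 'm1::finite, 'm2::finite) lqgame \<Rightarrow> nat \<Rightarrow> real^'n \<Rightarrow> (nat \<Rightarrow> real^'m2) \<Rightarrow> nat \<Rightarrow> real^'m1" where
  "alpha S t x v k = - (H1 S k *v XS S t x v k + H2 S k *v v k + H3 S k *v piS S v (Suc k))"

definition traj :: "('n::finite, 'm1::finite, 'm2::finite) lqgame \<Rightarrow> nat \<Rightarrow> real^'n \<Rightarrow> (nat \<Rightarrow> real^'m1) \<Rightarrow> (nat \<Rightarrow> real^'m2) \<Rightarrow> nat \<Rightarrow> real^'n" where
  "traj S k y u v = fwd (\<lambda>j X. sA S *v X + sB1 S *v u j + sB2 S *v v j) y k"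

definition J2 :: "('n::finite, 'm1::finite, 'm2::finite) lqgame \<Rightarrow> nat \<Rightarrow> real^'n \<Rightarrow> (nat \<Rightarrow> real^'m1) \<Rightarrow> (nat \<Rightarrow> real^'m2) \<Rightarrow> real" where
  "J2 S k y u v = (let X = traj S k y u v in
     (\<Sum>j\<in>{k..<sN S}. X j \<bullet> (sQ2 S *v X j) + u j \<bullet> (sR2 S *v u j) + v j \<bullet> (sW2 S *v v j))
     + X (sN S) \<bullet> (sG2 S *v X (sN S)))"

definition cond_i :: "('n::finite, 'm1::finite, 'm2::finite) lqgame \<Rightarrow> nat \<Rightarrow> real^'n \<Rightarrow> (nat \<Rightarrow> real^'m2) \<Rightarrow> bool" where
  "cond_i S t x vs \<longleftrightarrow>
     (let Xs = traj S t x (alpha S t x vs) vs in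
      \<forall>k\<in>{t..<sN S}. \<forall>w :: real^'m2.
        J2 S k (Xs k) (alpha S t x vs) vs
          \<le> J2 S k (Xs k) (alpha S t x (vs(k := w))) (vs(k := w)))"

definition ZS :: "('n::finite, 'm1::finite, 'm2::finite) lqgame \<Rightarrow> nat \<Rightarrow> real^'n \<Rightarrow> (nat \<Rightarrow> real^'m2) \<Rightarrow> nat \<Rightarrow> real^'n" where
  "ZS S t x v = (let X = XS S t x v in
     bwd (\<lambda>k z. sQ2 S *v X k + transpose (sA S) *v z) (sG2 S *v X (sN S)) (sN S))"

text \<open>Zbar^{(k)}_l for l in T_k (the recursion does not depend on k, so Zbar^{(k)}_l = ZbarS l):
  Zbar_l = H1_l^T R2 (H1_l X_l + H2_l v_l + H3_l pi_{l+1}) - H1_l^T B1^T Z_{l+1} + At_l^T Zbar_{l+1}, Zbar_N = 0\<close>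
definition ZbarS :: "('n::finite, 'm1::finite, 'm2::finite) lqgame \<Rightarrow> nat \<Rightarrow> real^'n \<Rightarrow> (nat \<Rightarrow> real^'m2) \<Rightarrow> nat \<Rightarrow> nat \<Rightarrow> real^'n" where
  "ZbarS S t x v k = (let X = XS S t x v; p = piS S v; Z = ZS S t x v in
     bwd (\<lambda>l z. transpose (H1 S l) *v (sR2 S *v (H1 S l *v X l + H2 S l *v v l + H3 S l *v p (Suc l)))
               - transpose (H1 S l) *v (transpose (sB1 S) *v Z (Suc l))
               + transpose (At S l) *v z) 0 (sN S))"

definition cond_ii :: "('n::finite, 'm1::finite, 'm2::finite) lqgame \<Rightarrow> nat \<Rightarrow> real^'n \<Rightarrow> (nat \<Rightarrow> real^'m2) \<Rightarrow> bool" where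
  "cond_ii S t x vs \<longleftrightarrow>
     (let X = XS S t x vs; p = piS S vs; Z = ZS S t x vs; R2 = sR2 S in
      \<forall>k\<in>{t..<sN S}.
        let D = (\<lambda>i. Dm S i k); Zb = ZbarS S t x vs k in
        (transpose (Bt S k) - (\<Sum>i\<in>{t..<k}. D i ** transpose (H1 S k) ** transpose (sB1 S))) *v Z (Suc k)
      + (transpose (Bt S k) + (\<Sum>i\<in>{t..<k}. D i ** transpose (At S k))) *v Zb (Suc k)
      + (transpose (H2 S k) ** R2 ** H1 S k + (\<Sum>i\<in>{t..<k}. D i ** transpose (H1 S k) ** R2 ** H1 S k)) *v X k
      + (sW2 S + transpose (H2 S k) ** R2 ** H2 S k
           + (\<Sum>i\<in>{t..<k}. D i ** transpose (H1 S k) ** R2 ** H2 S k)) *v vs k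
      + (transpose (H2 S k) ** R2 ** H3 S k + (\<Sum>i\<in>{t..<k}. D i ** transpose (H1 S k) ** R2 ** H3 S k)) *v p (Suc k)
      = 0)"

text \<open>Unique existence in l^2(T_t; R^m2): sequences are identified when they agree on T_t.\<close>
definition uniq_on :: "nat \<Rightarrow> nat \<Rightarrow> ((nat \<Rightarrow> 'a) \<Rightarrow> bool) \<Rightarrow> bool" where
  "uniq_on t N P \<longleftrightarrow> (\<exists>v. P v \<and> (\<forall>w. P w \<longrightarrow> (\<forall>k\<in>{t..<N}. w k = v k)))"

end

theory Submission
  imports Defs
begin


declare transpose_matrix_vector[simp del] vector_transpose_matrix[simp del]

lemma bwd_ge: "N \<le> k \<Longrightarrow> bwd F b N k = b"
  by (subst bwd.simps) simp
lemma bwd_lt: "k < N \<Longrightarrow> bwd F b N k = F k (bwd F b N (Suc k))"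
  by (subst bwd.simps) simp
declare bwd.simps[simp del]

lemma down_induct:
  assumes "\<And>k. N \<le> k \<Longrightarrow> P k" "\<And>k. k < N \<Longrightarrow> P (Suc k) \<Longrightarrow> P k"
  shows "P k"
proof (induction "N - k" arbitrary: k)
  case 0 then show ?case using assms(1) by simp
next
  case (Suc n) then show ?case using assms(2)[of k] by (metis Suc_diff_Suc diff_is_0_eq' nat.inject zero_less_Suc zero_less_diff)
qed

lemma fwd_le: "k \<le> t \<Longrightarrow> fwd F x t k = x"
  by (cases k) auto
lemma fwd_Suc: "t \<le> k \<Longrightarrow> fwd F x t (Suc k) = F k (fwd F x t k)"
  by simp

lemma mvec_neg: "(- A) *v x = - (A *v (x::real^'n))"
  by (simp add: matrix_vector_mult_def vec_eq_iff sum_negf)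
lemma mvec_negr: "A *v (- x) = - (A *v (x::real^'n))"
  by (simp add: matrix_vector_mult_def vec_eq_iff sum_negf)
lemma dot_transpose: "(x::real^'n) \<bullet> (transpose A *v y) = (A *v x) \<bullet> y"
  by (metis dot_lmul_matrix inner_commute transpose_matrix_vector)
lemma sum_mvec: "(\<Sum>i\<in>I. f i) *v (y::real^'n) = (\<Sum>i\<in>I. f i *v y)"
  by (induction I rule: infinite_finite_induct) (auto simp: matrix_vector_mult_add_rdistrib)
lemma mvec_sum: "A *v (\<Sum>i\<in>I. f i) = (\<Sum>i\<in>I. A *v (f i::real^'n))"
  by (induction I rule: infinite_finite_induct) (auto simp: matrix_vector_right_distrib)

lemma aprod_le: "j \<le> Suc i \<Longrightarrow> aprod F i j = mat 1"
  by (cases j) auto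
lemma aprod_Suc: "i < j \<Longrightarrow> aprod F i (Suc j) = F j ** aprod F i j"
  by simp
lemma aprod_left: "Suc i < k \<Longrightarrow> aprod F i k = aprod F (Suc i) k ** F (Suc i)"
proof (induction k)
  case 0 then show ?case by simp
next
  case (Suc k)
  show ?case
  proof (cases "Suc i = k")
    case True then show ?thesis by (simp add: aprod_le)
  next
    case False
    then have "Suc i < k" using Suc.prems by simp
    then show ?thesis using Suc.IH by (simp add: matrix_mul_assoc)
  qed
qed

lemma quad_exp:
  fixes a b :: "real^'n"
  assumes "transpose Q = Q"
  shows "(a + s *\<^sub>R b) \<bullet> (Q *v (a + s *\<^sub>R b)) = a \<bullet> (Q *v a) + 2 * s * (b \<bullet> (Q *v a)) + s^2 * (b \<bullet> (Q *v b))"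
proof -
  have "a \<bullet> (Q *v b) = b \<bullet> (Q *v a)"
    by (metis assms dot_transpose inner_commute)
  then show ?thesis
    by (simp add: matrix_vector_right_distrib matrix_vector_mult_scaleR inner_add_left inner_add_right
        power2_eq_square algebra_simps)
qed

lemma zero_lemma:
  fixes G Q :: real
  assumes "\<forall>r. 0 \<le> 2 * r * G + r^2 * Q" "0 \<le> Q" "0 \<le> G"
  shows "G = 0"
proof (rule ccontr)
  assume "G \<noteq> 0"
  then have G: "G > 0" using assms by simp
  have Q1: "Q + 1 > 0" using assms(2) by simp
  define r where "r = - G / (Q+1)"
  have r: "r < 0" using G Q1 by (simp add: r_def)
  have "Q / (Q+1) < 1" using Q1 by simp
  then have "G * (Q / (Q+1)) < G * 1" using G by (intro mult_strict_left_mono) simp_all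
  then have "r * Q > - G" by (simp add: r_def)
  then have pos: "2 * G + r * Q > 0" using G by simp
  have "2 * r * G + r^2 * Q = r * (2 * G + r * Q)" by (simp add: power2_eq_square algebra_simps)
  also have "\<dots> < 0" using r pos by (simp add: mult_neg_pos)
  finally show False using assms(1) spec[OF assms(1), of r] by linarith
qed



lemma piS_ge: "sN S \<le> k \<Longrightarrow> piS S v k = 0"
  by (simp add: piS_def bwd_ge)
lemma piS_lt: "k < sN S \<Longrightarrow> piS S v k = transpose (Cm S k) *v v k + transpose (At S k) *v piS S v (Suc k)"
  by (simp add: piS_def bwd_lt)

lemma XS_le: "k \<le> t \<Longrightarrow> XS S t x v k = x"
  by (simp add: XS_def fwd_le)
lemma XS_Suc: "t \<le> k \<Longrightarrow> XS S t x v (Suc k) = At S k *v XS S t x v k + Bt S k *v v k + Ct S k *v piS S v (Suc k)"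
  by (simp add: XS_def)

lemma traj_le: "j \<le> k \<Longrightarrow> traj S k y u v j = y"
  by (simp add: traj_def fwd_le)
lemma traj_Suc: "k \<le> j \<Longrightarrow> traj S k y u v (Suc j) = sA S *v traj S k y u v j + sB1 S *v u j + sB2 S *v v j"
  by (simp add: traj_def)

lemma piS_lin: "piS S (\<lambda>j. v j + s *\<^sub>R e j) j = piS S v j + s *\<^sub>R piS S e j"
proof (induction j rule: down_induct[where N="sN S"])
  case (1 k) then show ?case by (simp add: piS_ge)
next
  case (2 k) then show ?case
    by (simp add: piS_lt matrix_vector_right_distrib matrix_vector_mult_scaleR algebra_simps)
qed

lemma XS_aff: "XS S t x (\<lambda>j. v j + s *\<^sub>R e j) j = XS S t x v j + s *\<^sub>R XS S t 0 e j"
proof (induction j)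
  case 0 then show ?case by (simp add: XS_le)
next
  case (Suc j)
  show ?case
  proof (cases "Suc j \<le> t")
    case True then show ?thesis by (simp add: XS_le)
  next
    case False
    then have "t \<le> j" by simp
    then show ?thesis using Suc.IH
      by (simp add: XS_Suc piS_lin matrix_vector_right_distrib matrix_vector_mult_scaleR algebra_simps)
  qed
qed

lemma alpha_aff: "alpha S t x (\<lambda>j. v j + s *\<^sub>R e j) j = alpha S t x v j + s *\<^sub>R alpha S t 0 e j"
  by (simp add: alpha_def XS_aff piS_lin matrix_vector_right_distrib matrix_vector_mult_scaleR algebra_simps)

lemma traj_aff: "traj S k y (\<lambda>j. u j + s *\<^sub>R du j) (\<lambda>j. v j + s *\<^sub>R dv j) j
   = traj S k y u v j + s *\<^sub>R traj S k 0 du dv j"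
proof (induction j)
  case 0 then show ?case by (simp add: traj_le)
next
  case (Suc j)
  show ?case
  proof (cases "Suc j \<le> k")
    case True then show ?thesis by (simp add: traj_le)
  next
    case False
    then have "k \<le> j" by simp
    then show ?thesis using Suc.IH
      by (simp add: traj_Suc matrix_vector_right_distrib matrix_vector_mult_scaleR algebra_simps)
  qed
qed

lemma step_eq:
  assumes "t \<le> j"
  shows "sA S *v XS S t x v j + sB1 S *v alpha S t x v j + sB2 S *v v j = XS S t x v (Suc j)"
  using assms
  by (simp add: XS_Suc alpha_def At_def Bt_def Ct_def matrix_vector_mult_diff_rdistrib mvec_neg mvec_negr
      matrix_vector_right_distrib matrix_vector_mul_assoc[symmetric] algebra_simps)

lemma traj_XS: "traj S t x (alpha S t x v) v j = XS S t x v j"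
proof (induction j)
  case 0 then show ?case by (simp add: traj_le XS_le)
next
  case (Suc j)
  show ?case
  proof (cases "Suc j \<le> t")
    case True then show ?thesis by (simp add: traj_le XS_le)
  next
    case False
    then have "t \<le> j" by simp
    then show ?thesis using Suc.IH by (simp add: traj_Suc step_eq)
  qed
qed

lemma traj_XS2:
  assumes "t \<le> k" "k \<le> j"
  shows "traj S k (XS S t x v k) (alpha S t x v) v j = XS S t x v j"
  using assms(2)
proof (induction j)
  case 0 then show ?case by (simp add: traj_le)
next
  case (Suc j)
  show ?case
  proof (cases "Suc j = k")
    case True then show ?thesis by (simp add: traj_le)
  next
    case False
    then have "k \<le> j" using Suc.prems by simp
    then show ?thesis using Suc.IH assms(1) by (simp add: traj_Suc step_eq)
  qed
qed

definition LinF where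
  "LinF S k Y u v dY du dv = (\<Sum>j\<in>{k..<sN S}. dY j \<bullet> (sQ2 S *v Y j) + du j \<bullet> (sR2 S *v u j) + dv j \<bullet> (sW2 S *v v j))
      + dY (sN S) \<bullet> (sG2 S *v Y (sN S))"
definition QuadF where
  "QuadF S k dY du dv = (\<Sum>j\<in>{k..<sN S}. dY j \<bullet> (sQ2 S *v dY j) + du j \<bullet> (sR2 S *v du j) + dv j \<bullet> (sW2 S *v dv j))
      + dY (sN S) \<bullet> (sG2 S *v dY (sN S))"

lemma J2_exp:
  assumes "transpose (sQ2 S) = sQ2 S" "transpose (sR2 S) = sR2 S" "transpose (sW2 S) = sW2 S" "transpose (sG2 S) = sG2 S"
  shows "J2 S k y (\<lambda>j. u j + s *\<^sub>R du j) (\<lambda>j. v j + s *\<^sub>R dv j)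
    = J2 S k y u v + 2 * s * LinF S k (traj S k y u v) u v (traj S k 0 du dv) du dv
      + s^2 * QuadF S k (traj S k 0 du dv) du dv"
proof -
  define Y where "Y = traj S k y u v"
  define dY where "dY = traj S k 0 du dv"
  have T: "traj S k y (\<lambda>j. u j + s *\<^sub>R du j) (\<lambda>j. v j + s *\<^sub>R dv j) = (\<lambda>j. Y j + s *\<^sub>R dY j)"
    by (rule ext) (simp add: traj_aff Y_def dY_def)
  have E: "(Y j + s *\<^sub>R dY j) \<bullet> (sQ2 S *v (Y j + s *\<^sub>R dY j))
        + (u j + s *\<^sub>R du j) \<bullet> (sR2 S *v (u j + s *\<^sub>R du j))
        + (v j + s *\<^sub>R dv j) \<bullet> (sW2 S *v (v j + s *\<^sub>R dv j))
     = (Y j \<bullet> (sQ2 S *v Y j) + u j \<bullet> (sR2 S *v u j) + v j \<bullet> (sW2 S *v v j))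
       + 2 * s * (dY j \<bullet> (sQ2 S *v Y j) + du j \<bullet> (sR2 S *v u j) + dv j \<bullet> (sW2 S *v v j))
       + s^2 * (dY j \<bullet> (sQ2 S *v dY j) + du j \<bullet> (sR2 S *v du j) + dv j \<bullet> (sW2 S *v dv j))" for j
    using quad_exp[OF assms(1)] quad_exp[OF assms(2)] quad_exp[OF assms(3)] by (simp add: algebra_simps)
  show ?thesis
    unfolding J2_def Let_def T LinF_def QuadF_def Y_def[symmetric] dY_def[symmetric]
    apply (simp only: E quad_exp[OF assms(4)] sum.distrib)
    apply (simp only: sum_distrib_left[symmetric])
    apply (simp add: algebra_simps sum.distrib)
    done
qed



definition gk :: "('n::finite, 'm1::finite, 'm2::finite) lqgame \<Rightarrow> nat \<Rightarrow> real^'n \<Rightarrow> (nat \<Rightarrow> real^'m2) \<Rightarrow> nat \<Rightarrow> real^'m2" where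
  "gk S t x vs k =
     (let X = XS S t x vs; p = piS S vs; Z = ZS S t x vs; R2 = sR2 S in
        let D = (\<lambda>i. Dm S i k); Zb = ZbarS S t x vs k in
        (transpose (Bt S k) - (\<Sum>i\<in>{t..<k}. D i ** transpose (H1 S k) ** transpose (sB1 S))) *v Z (Suc k)
      + (transpose (Bt S k) + (\<Sum>i\<in>{t..<k}. D i ** transpose (At S k))) *v Zb (Suc k)
      + (transpose (H2 S k) ** R2 ** H1 S k + (\<Sum>i\<in>{t..<k}. D i ** transpose (H1 S k) ** R2 ** H1 S k)) *v X k
      + (sW2 S + transpose (H2 S k) ** R2 ** H2 S k
           + (\<Sum>i\<in>{t..<k}. D i ** transpose (H1 S k) ** R2 ** H2 S k)) *v vs k
      + (transpose (H2 S k) ** R2 ** H3 S k + (\<Sum>i\<in>{t..<k}. D i ** transpose (H1 S k) ** R2 ** H3 S k)) *v p (Suc k))"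

lemma cond_ii_iff: "cond_ii S t x vs \<longleftrightarrow> (\<forall>k\<in>{t..<sN S}. gk S t x vs k = 0)"
  by (simp add: cond_ii_def gk_def Let_def)

lemma dot_mvec: "(x::real^'m) \<bullet> (A *v y) = (transpose A *v x) \<bullet> y"
  using dot_transpose[of x "transpose A" y] by simp

lemma dsum: "(d::real^'m) \<bullet> ((\<Sum>i\<in>I. D i ** M) *v z) = (\<Sum>i\<in>I. transpose (D i) *v d) \<bullet> (M *v z)"
proof -
  have "d \<bullet> ((\<Sum>i\<in>I. D i ** M) *v z) = (\<Sum>i\<in>I. d \<bullet> (D i *v (M *v z)))"
    by (simp add: sum_mvec inner_sum_right matrix_vector_mul_assoc[symmetric])
  also have "\<dots> = (\<Sum>i\<in>I. (transpose (D i) *v d) \<bullet> (M *v z))"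
    by (rule sum.cong[OF refl]) (rule dot_mvec)
  finally show ?thesis by (simp add: inner_sum_left)
qed

lemma Lin_eq:
  fixes S :: "('n::finite, 'm1::finite, 'm2::finite) lqgame" and d :: "real^'m2"
  assumes tk: "t \<le> k" and kN: "k < sN S"
  defines "e \<equiv> (\<lambda>j. if j = k then d else 0)"
  shows "LinF S k (XS S t x vs) (alpha S t x vs) vs (traj S k 0 (alpha S t 0 e) e) (alpha S t 0 e) e
         = d \<bullet> gk S t x vs k"
proof -
  define N where "N = sN S"
  define X where "X = XS S t x vs"
  define p where "p = piS S vs"
  define u where "u = alpha S t x vs"
  define Z where "Z = ZS S t x vs"
  define Zb where "Zb = ZbarS S t x vs k"
  define dp where "dp = piS S e"
  define dX where "dX = XS S t 0 e"
  define du where "du = alpha S t 0 e"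
  define dY where "dY = traj S k 0 du e"
  have kN': "k < N" using kN N_def by simp
  have ek: "e k = d" by (simp add: e_def)
  have en: "j \<noteq> k \<Longrightarrow> e j = 0" for j by (simp add: e_def)
  have F1: "k < j \<Longrightarrow> dp j = 0" for j
  proof (induction j rule: down_induct[where N=N])
    case (1 j) then show ?case by (simp add: dp_def piS_ge N_def)
  next
    case (2 j) then show ?case by (simp add: dp_def piS_lt N_def ek en)
  qed
  have F2: "i < k \<Longrightarrow> dp (Suc i) = transpose (aprod (At S) i k) *v (transpose (Cm S k) *v d)" for i
  proof (induction i rule: down_induct[where N=k])
    case (1 i) then show ?case by simp
  next
    case (2 i)
    show ?case
    proof (cases "Suc i = k")
      case True
      then have "dp (Suc i) = transpose (Cm S k) *v d"
        using kN F1[of "Suc k"] by (simp add: dp_def piS_lt ek en)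
      then show ?thesis using True by (simp add: aprod_le)
    next
      case False
      then have si: "Suc i < k" using 2 by simp
      have "dp (Suc i) = transpose (At S (Suc i)) *v dp (Suc (Suc i))"
        using si kN by (simp add: dp_def piS_lt ek en)
      then show ?thesis using 2(2)[OF si] aprod_left[OF si, of "At S"]
        by (simp add: matrix_transpose_mul matrix_vector_mul_assoc matrix_mul_assoc)
    qed
  qed
  have F3: "t \<le> j \<Longrightarrow> j \<le> k \<Longrightarrow> dX j = (\<Sum>i\<in>{t..<j}. aprod (At S) i j *v (Ct S i *v dp (Suc i)))" for j
  proof (induction j)
    case 0 then show ?case by (simp add: dX_def XS_le)
  next
    case (Suc j)
    show ?case
    proof (cases "Suc j = t")
      case True then show ?thesis by (simp add: dX_def XS_le)
    next
      case False
      then have tj: "t \<le> j" and jk: "j < k" using Suc.prems by auto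
      have "dX (Suc j) = At S j *v dX j + Ct S j *v dp (Suc j)"
        using tj jk by (simp add: dX_def XS_Suc ek en dp_def)
      also have "At S j *v dX j = (\<Sum>i\<in>{t..<j}. aprod (At S) i (Suc j) *v (Ct S i *v dp (Suc i)))"
        using Suc.IH tj jk by (simp add: mvec_sum matrix_vector_mul_assoc matrix_mul_assoc)
      finally show ?thesis using tj by (simp add: sum.atLeastLessThan_Suc aprod_le)
    qed
  qed
  define a where "a = (\<Sum>i\<in>{t..<k}. transpose (Dm S i k) *v d)"
  have F4: "dX k = a"
    unfolding a_def F3[OF tk order.refl]
  proof (rule sum.cong[OF refl])
    fix i assume "i \<in> {t..<k}"
    then have "i < k" by simp
    then show "aprod (At S) i k *v (Ct S i *v dp (Suc i)) = transpose (Dm S i k) *v d"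
      by (simp add: F2 Dm_def matrix_transpose_mul matrix_vector_mul_assoc)
  qed
  have F5: "dX (Suc k) = At S k *v a + Bt S k *v d"
    using tk F1[of "Suc k"] F4 by (simp add: dX_def XS_Suc ek en dp_def)
  have F6: "k < j \<Longrightarrow> dX (Suc j) = At S j *v dX j" for j
    using tk F1[of "Suc j"] by (simp add: dX_def XS_Suc ek en dp_def)
  have F7a: "du k = - (H1 S k *v a + H2 S k *v d)"
    using F1[of "Suc k"] F4 by (simp add: du_def alpha_def dX_def[symmetric] dp_def[symmetric] ek en)
  have F7: "k < j \<Longrightarrow> du j = - (H1 S j *v dX j)" for j
    using F1[of "Suc j"] by (simp add: du_def alpha_def dX_def[symmetric] dp_def[symmetric] ek en)
  have F8a: "dY k = 0" by (simp add: dY_def traj_le)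
  have F8: "k \<le> j \<Longrightarrow> dY (Suc j) = sA S *v dY j + sB1 S *v du j + sB2 S *v e j" for j
    by (simp add: dY_def traj_Suc)
  have Zr: "j < N \<Longrightarrow> Z j = sQ2 S *v X j + transpose (sA S) *v Z (Suc j)" for j
    by (simp add: Z_def ZS_def Let_def bwd_lt N_def X_def)
  have ZN: "Z N = sG2 S *v X N"
    by (simp add: Z_def ZS_def Let_def bwd_ge N_def X_def)
  have Zbr: "j < N \<Longrightarrow> Zb j = transpose (H1 S j) *v (sR2 S *v (H1 S j *v X j + H2 S j *v vs j + H3 S j *v p (Suc j)))
               - transpose (H1 S j) *v (transpose (sB1 S) *v Z (Suc j))
               + transpose (At S j) *v Zb (Suc j)" for j
    by (simp add: Zb_def ZbarS_def Let_def bwd_lt N_def X_def p_def Z_def)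
  have ZbN: "Zb N = 0"
    by (simp add: Zb_def ZbarS_def Let_def bwd_ge N_def)
  have ur: "u j = - (H1 S j *v X j + H2 S j *v vs j + H3 S j *v p (Suc j))" for j
    by (simp add: u_def alpha_def X_def p_def)
  have SBP1: "k \<le> m \<Longrightarrow> m \<le> N \<Longrightarrow>
     (\<Sum>j\<in>{m..<N}. dY j \<bullet> (sQ2 S *v X j)) + dY N \<bullet> (sG2 S *v X N)
     = dY m \<bullet> Z m + (\<Sum>j\<in>{m..<N}. (sB1 S *v du j + sB2 S *v e j) \<bullet> Z (Suc j))" for m
  proof (induction m rule: down_induct[where N=N])
    case (1 m) then have "m = N" by simp
    then show ?case by (simp add: ZN)
  next
    case (2 m)
    have IH: "(\<Sum>j\<in>{Suc m..<N}. dY j \<bullet> (sQ2 S *v X j)) + dY N \<bullet> (sG2 S *v X N)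
     = dY (Suc m) \<bullet> Z (Suc m) + (\<Sum>j\<in>{Suc m..<N}. (sB1 S *v du j + sB2 S *v e j) \<bullet> Z (Suc j))"
      using 2 by simp
    show ?case
      using 2(1,3) IH
      by (simp add: sum.atLeast_Suc_lessThan Zr F8 inner_add_left inner_add_right dot_transpose algebra_simps)
  qed
  have SBP2: "k < m \<Longrightarrow> m \<le> N \<Longrightarrow>
     (\<Sum>j\<in>{m..<N}. (sB1 S *v du j) \<bullet> Z (Suc j) + du j \<bullet> (sR2 S *v u j)) = dX m \<bullet> Zb m" for m
  proof (induction m rule: down_induct[where N=N])
    case (1 m) then have "m = N" by simp
    then show ?case by (simp add: ZbN)
  next
    case (2 m)
    have IH: "(\<Sum>j\<in>{Suc m..<N}. (sB1 S *v du j) \<bullet> Z (Suc j) + du j \<bullet> (sR2 S *v u j)) = dX (Suc m) \<bullet> Zb (Suc m)"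
      using 2 by simp
    show ?case
      using 2(1,3) IH
      by (simp add: sum.atLeast_Suc_lessThan Zbr F6 F7 ur inner_add_left inner_add_right inner_diff_left
          inner_diff_right inner_minus_left inner_minus_right mvec_negr matrix_vector_right_distrib
          matrix_vector_mult_diff_distrib dot_transpose algebra_simps)
  qed
  have A1: "(\<Sum>j\<in>{k..<N}. dY j \<bullet> (sQ2 S *v X j)) + dY N \<bullet> (sG2 S *v X N)
      = (\<Sum>j\<in>{k..<N}. (sB1 S *v du j + sB2 S *v e j) \<bullet> Z (Suc j))"
    using SBP1[of k] kN' F8a by simp
  have A2: "(\<Sum>j\<in>{k..<N}. (sB1 S *v du j + sB2 S *v e j) \<bullet> Z (Suc j) + du j \<bullet> (sR2 S *v u j))
     = (sB1 S *v du k + sB2 S *v d) \<bullet> Z (Suc k) + du k \<bullet> (sR2 S *v u k) + dX (Suc k) \<bullet> Zb (Suc k)"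
  proof -
    have "(\<Sum>j\<in>{Suc k..<N}. (sB1 S *v du j + sB2 S *v e j) \<bullet> Z (Suc j) + du j \<bullet> (sR2 S *v u j))
       = (\<Sum>j\<in>{Suc k..<N}. (sB1 S *v du j) \<bullet> Z (Suc j) + du j \<bullet> (sR2 S *v u j))"
      by (rule sum.cong) (auto simp: ek en)
    also have "\<dots> = dX (Suc k) \<bullet> Zb (Suc k)" using SBP2[of "Suc k"] kN' by simp
    finally show ?thesis using kN' by (simp add: sum.atLeast_Suc_lessThan ek en)
  qed
  have A3: "(\<Sum>j\<in>{k..<N}. e j \<bullet> (sW2 S *v vs j)) = d \<bullet> (sW2 S *v vs k)"
    using kN' by (simp add: sum.atLeast_Suc_lessThan ek en)
  have L: "LinF S k X u vs dY du e
      = (sB1 S *v du k + sB2 S *v d) \<bullet> Z (Suc k) + du k \<bullet> (sR2 S *v u k) + dX (Suc k) \<bullet> Zb (Suc k)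
        + d \<bullet> (sW2 S *v vs k)"
  proof -
    have "LinF S k X u vs dY du e = ((\<Sum>j\<in>{k..<N}. dY j \<bullet> (sQ2 S *v X j)) + dY N \<bullet> (sG2 S *v X N))
        + (\<Sum>j\<in>{k..<N}. du j \<bullet> (sR2 S *v u j)) + (\<Sum>j\<in>{k..<N}. e j \<bullet> (sW2 S *v vs j))"
      by (simp add: LinF_def N_def sum.distrib)
    also have "\<dots> = (\<Sum>j\<in>{k..<N}. (sB1 S *v du j + sB2 S *v e j) \<bullet> Z (Suc j) + du j \<bullet> (sR2 S *v u j))
        + d \<bullet> (sW2 S *v vs k)"
      unfolding A1 A3 by (simp add: sum.distrib)
    finally show ?thesis unfolding A2 .
  qed
  have G: "d \<bullet> gk S t x vs k =
      (Bt S k *v d) \<bullet> Z (Suc k) - a \<bullet> (transpose (H1 S k) *v (transpose (sB1 S) *v Z (Suc k)))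
    + (Bt S k *v d) \<bullet> Zb (Suc k) + a \<bullet> (transpose (At S k) *v Zb (Suc k))
    + d \<bullet> ((transpose (H2 S k) ** sR2 S ** H1 S k) *v X k) + a \<bullet> ((transpose (H1 S k) ** sR2 S ** H1 S k) *v X k)
    + d \<bullet> (sW2 S *v vs k) + d \<bullet> ((transpose (H2 S k) ** sR2 S ** H2 S k) *v vs k)
    + a \<bullet> ((transpose (H1 S k) ** sR2 S ** H2 S k) *v vs k)
    + d \<bullet> ((transpose (H2 S k) ** sR2 S ** H3 S k) *v p (Suc k))
    + a \<bullet> ((transpose (H1 S k) ** sR2 S ** H3 S k) *v p (Suc k))"
    unfolding gk_def Let_def X_def[symmetric] p_def[symmetric] Z_def[symmetric] Zb_def[symmetric]
    apply (simp only: matrix_mul_assoc[symmetric] matrix_vector_mult_diff_rdistrib matrix_vector_mult_add_rdistrib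
        inner_add_right inner_diff_right)
    apply (simp only: dsum a_def[symmetric])
    apply (simp add: matrix_vector_mul_assoc[symmetric] dot_transpose algebra_simps)
    done
  have "LinF S k X u vs dY du e = d \<bullet> gk S t x vs k"
    unfolding L G F5 F7a ur
    by (simp add: Bt_def inner_add_left inner_add_right inner_diff_left
          inner_diff_right inner_minus_left inner_minus_right mvec_negr mvec_neg matrix_vector_right_distrib
          matrix_vector_mult_diff_distrib matrix_vector_mult_add_rdistrib matrix_vector_mult_diff_rdistrib
          matrix_vector_mul_assoc[symmetric] dot_transpose algebra_simps)
  then show ?thesis by (simp add: X_def u_def dY_def du_def)
qed



lemma nnd_sym: "nnd M \<Longrightarrow> transpose M = M" by (simp add: nnd_def)
lemma nnd_pos: "nnd M \<Longrightarrow> 0 \<le> y \<bullet> (M *v y)" by (simp add: nnd_def)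

lemma expand_k:
  fixes S :: "('n::finite, 'm1::finite, 'm2::finite) lqgame" and d :: "real^'m2"
  assumes tk: "t \<le> k" and kN: "k < sN S"
    and n: "nnd (sQ2 S)" "nnd (sR2 S)" "nnd (sW2 S)" "nnd (sG2 S)"
  shows "\<exists>Q\<ge>0. \<forall>r. J2 S k (XS S t x vs k) (alpha S t x (vs(k := vs k + r *\<^sub>R d))) (vs(k := vs k + r *\<^sub>R d))
      = J2 S k (XS S t x vs k) (alpha S t x vs) vs + 2 * r * (d \<bullet> gk S t x vs k) + r^2 * Q"
proof -
  define e where "e = (\<lambda>j. if j = k then d else 0)"
  define dY where "dY = traj S k 0 (alpha S t 0 e) e"
  define Q where "Q = QuadF S k dY (alpha S t 0 e) e"
  have Q0: "Q \<ge> 0"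
    unfolding Q_def QuadF_def
    by (intro add_nonneg_nonneg sum_nonneg nnd_pos n)
  have V: "vs(k := vs k + r *\<^sub>R d) = (\<lambda>j. vs j + r *\<^sub>R e j)" for r
    by (rule ext) (simp add: e_def)
  have AL: "alpha S t x (\<lambda>j. vs j + r *\<^sub>R e j) = (\<lambda>j. alpha S t x vs j + r *\<^sub>R alpha S t 0 e j)" for r
    by (rule ext) (simp add: alpha_aff)
  have LF: "LinF S k (traj S k (XS S t x vs k) (alpha S t x vs) vs) (alpha S t x vs) vs dY (alpha S t 0 e) e
      = LinF S k (XS S t x vs) (alpha S t x vs) vs dY (alpha S t 0 e) e"
    unfolding LinF_def using tk kN by (simp add: traj_XS2)
  have "J2 S k (XS S t x vs k) (alpha S t x (vs(k := vs k + r *\<^sub>R d))) (vs(k := vs k + r *\<^sub>R d))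
      = J2 S k (XS S t x vs k) (alpha S t x vs) vs + 2 * r * (d \<bullet> gk S t x vs k) + r^2 * Q" for r
    unfolding V AL J2_exp[OF nnd_sym[OF n(1)] nnd_sym[OF n(2)] nnd_sym[OF n(3)] nnd_sym[OF n(4)]]
    unfolding dY_def[symmetric] Q_def[symmetric] LF
    unfolding dY_def e_def Lin_eq[OF tk kN] ..
  then show ?thesis using Q0 by blast
qed

lemma cond_k_iff:
  fixes S :: "('n::finite, 'm1::finite, 'm2::finite) lqgame"
  assumes tk: "t \<le> k" and kN: "k < sN S"
    and n: "nnd (sQ2 S)" "nnd (sR2 S)" "nnd (sW2 S)" "nnd (sG2 S)"
  shows "(\<forall>w. J2 S k (XS S t x vs k) (alpha S t x vs) vs \<le> J2 S k (XS S t x vs k) (alpha S t x (vs(k := w))) (vs(k := w)))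
     \<longleftrightarrow> gk S t x vs k = 0"
proof
  assume H: "\<forall>w. J2 S k (XS S t x vs k) (alpha S t x vs) vs \<le> J2 S k (XS S t x vs k) (alpha S t x (vs(k := w))) (vs(k := w))"
  define g where "g = gk S t x vs k"
  obtain Q where Q: "Q \<ge> 0" and E: "\<forall>r. J2 S k (XS S t x vs k) (alpha S t x (vs(k := vs k + r *\<^sub>R g))) (vs(k := vs k + r *\<^sub>R g))
      = J2 S k (XS S t x vs k) (alpha S t x vs) vs + 2 * r * (g \<bullet> g) + r^2 * Q"
    using expand_k[OF tk kN n, of x vs g] unfolding g_def by blast
  have "\<forall>r. 0 \<le> 2 * r * (g \<bullet> g) + r^2 * Q"
  proof
    fix r
    show "0 \<le> 2 * r * (g \<bullet> g) + r^2 * Q" using H[rule_format, of "vs k + r *\<^sub>R g"] E[rule_format, of r] by simp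
  qed
  then have "g \<bullet> g = 0" using zero_lemma Q by (metis inner_ge_zero)
  then show "gk S t x vs k = 0" unfolding g_def by simp
next
  assume G: "gk S t x vs k = 0"
  show "\<forall>w. J2 S k (XS S t x vs k) (alpha S t x vs) vs \<le> J2 S k (XS S t x vs k) (alpha S t x (vs(k := w))) (vs(k := w))"
  proof
    fix w
    obtain Q where Q: "Q \<ge> 0" and E: "\<forall>r. J2 S k (XS S t x vs k) (alpha S t x (vs(k := vs k + r *\<^sub>R (w - vs k)))) (vs(k := vs k + r *\<^sub>R (w - vs k)))
      = J2 S k (XS S t x vs k) (alpha S t x vs) vs + 2 * r * ((w - vs k) \<bullet> gk S t x vs k) + r^2 * Q"
      using expand_k[OF tk kN n, of x vs "w - vs k"] by blast
    show "J2 S k (XS S t x vs k) (alpha S t x vs) vs \<le> J2 S k (XS S t x vs k) (alpha S t x (vs(k := w))) (vs(k := w))"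
      using E[rule_format, of 1] Q G by simp
  qed
qed

lemma cond_iff:
  fixes S :: "('n::finite, 'm1::finite, 'm2::finite) lqgame"
  assumes n: "nnd (sQ2 S)" "nnd (sR2 S)" "nnd (sW2 S)" "nnd (sG2 S)"
  shows "cond_i S t x vs \<longleftrightarrow> cond_ii S t x vs"
proof -
  have X: "traj S t x (alpha S t x vs) vs = XS S t x vs" by (rule ext) (simp add: traj_XS)
  show ?thesis
    unfolding cond_i_def Let_def X cond_ii_iff
    using cond_k_iff[OF _ _ n] by simp
qed

theorem theorem2:
  fixes S :: "('n::finite, 'm1::finite, 'm2::finite) lqgame"
    and t :: nat and x :: "real^'n"
  assumes "sN S > 2" and "t < sN S"
    and "nnd (sQ1 S)" "nnd (sQ2 S)" "nnd (sG1 S)" "nnd (sG2 S)"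
    and "nnd (sR1 S)" "nnd (sR2 S)" "nnd (sW1 S)" "nnd (sW2 S)"
    and "\<forall>k\<in>{t..<sN S}. posdef (Mk S k)"
  shows "(uniq_on t (sN S) (cond_i S t x) \<longleftrightarrow> uniq_on t (sN S) (cond_ii S t x))
       \<and> (uniq_on t (sN S) (cond_ii S t x) \<longrightarrow> (\<forall>v. cond_ii S t x v \<longrightarrow> cond_i S t x v))"
proof -
  have "cond_i S t x = cond_ii S t x"
    by (rule ext) (rule cond_iff[OF assms(4) assms(8) assms(10) assms(6)])
  then show ?thesis by simp
qed

end
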